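(* In the construction described in the context, at the end of the construction $k(A)\le\log t$ for every $A\in V_{cc}$; consequently every edge $e\in E$ crosses at most $2\log t$ of the complete cuts $C_G(X_1),\dots,C_G(X_{t-1})$, and in particular belongs to at most $2\log t$ of the sets $C_1,\dots,C_{t-1}$.
   Context: $\log$ denotes $\log_2$. Setting: $G=(V,E)$ is a connected finite undirected graph (parallel edges allowed), $w:E\to\mathbb{R}_{\ge0}$ edge weights, $c:E\to\mathbb{R}_{>0}$ edge costs, $n=|V|$. For $S\subseteq V$, $C_G(S)=\{e\in E:|e\cap S|=1\}$ (complete cut; its edges cross it) and $C_G(S,W)=\{e\in C_G(S):w(e)<W\}$ (partial cut). $F\subseteq E$ is a set with $G'=G\setminus F=(V,E\setminus F)$ connected; $B=c(F)$ and $\Delta=\mathrm{MST}(G')-\mathrm{MST}(G)$ (MST weights w.r.t. $w$). Construction: let $T$ be a minimum spanning tree of $G$ and $T\cap F=\{e_1,\dots,e_{t-1}\}$, with $t\ge2$. Removing these edges splits $T$ into components with vertex sets $A_1,\dots,A_t$ (a partition of $V$). Let $G'_{cc}$ be the multigraph with vertex set $V_{cc}=\{A_1,\dots,A_t\}$ having, for every edge $\{u,v\}\in E\setminus F$ with $u\in A_i$, $v\in A_j$, an edge between $A_i$ and $A_j$ of weight $w(\{u,v\})$ (identified with the original edge). Let $T'_{cc}$ be a minimum spanning tree of $G'_{cc}$, with edges $e'_1,\dots,e'_{t-1}$ indexed so that $w(e'_1)\le\dots\le w(e'_{t-1})$ (ties broken arbitrarily). For each $i$, deleting $e'_i,e'_{i+1},\dots,e'_{t-1}$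 from $T'_{cc}$ leaves a forest in which $e'_i$ joins two components $L_i,R_i\subseteq V_{cc}$. Counters $k(A)=0$ for all $A\in V_{cc}$ initially, and $k(S)=\max_{A\in S}k(A)$. For $i=1,\dots,t-1$ in order: set $X_i=L_i$ if $k(L_i)\le k(R_i)$, else $X_i=R_i$; then increase $k(A)$ by $1$ for every $A\in X_i$. Identifying a set of vertices of $G'_{cc}$ with the union of the corresponding vertex sets in $V$, define $C_i=C_G(X_i,w(e'_i))$. *)

theory Defs
  imports Main Complex_Main
begin

text \<open>Multigraphs: edges are identifiers of type 'e, each with an endpoint set
  given by a function en :: 'e => 'v set (card 2 for a proper edge, card 1 for a loop).\<close>

definition erel :: "('e \<Rightarrow> 'v set) \<Rightarrow> 'e set \<Rightarrow> ('v \<times> 'v) set" where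
  "erel en S = {(u, v). \<exists>e\<in>S. en e = {u, v}}"

definition connected_via :: "'v set \<Rightarrow> ('e \<Rightarrow> 'v set) \<Rightarrow> 'e set \<Rightarrow> bool" where
  "connected_via Vs en S = (\<forall>u\<in>Vs. \<forall>v\<in>Vs. (u, v) \<in> (erel en S)\<^sup>*)"

text \<open>A forest: no edge lies on a cycle (every edge is a bridge; loops are excluded).\<close>
definition is_forest :: "('e \<Rightarrow> 'v set) \<Rightarrow> 'e set \<Rightarrow> bool" where
  "is_forest en S = (\<forall>e\<in>S. \<forall>u v. en e = {u, v} \<longrightarrow> (u, v) \<notin> (erel en (S - {e}))\<^sup>*)"

definition spanning_tree :: "'v set \<Rightarrow> ('e \<Rightarrow> 'v set) \<Rightarrow> 'e set \<Rightarrow> 'e set \<Rightarrow> bool" where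
  "spanning_tree Vs en Es S = (S \<subseteq> Es \<and> connected_via Vs en S \<and> is_forest en S)"

definition is_mst :: "'v set \<Rightarrow> ('e \<Rightarrow> 'v set) \<Rightarrow> ('e \<Rightarrow> real) \<Rightarrow> 'e set \<Rightarrow> 'e set \<Rightarrow> bool" where
  "is_mst Vs en w Es S = (spanning_tree Vs en Es S \<and>
      (\<forall>S'. spanning_tree Vs en Es S' \<longrightarrow> sum w S \<le> sum w S'))"

definition conn_comp :: "('e \<Rightarrow> 'v set) \<Rightarrow> 'e set \<Rightarrow> 'v set \<Rightarrow> 'v \<Rightarrow> 'v set" where
  "conn_comp en S Vs v = {u \<in> Vs. (v, u) \<in> (erel en S)\<^sup>*}"

definition components :: "'v set \<Rightarrow> ('e \<Rightarrow> 'v set) \<Rightarrow> 'e set \<Rightarrow> 'v set set" where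
  "components Vs en S = conn_comp en S Vs ` Vs"

text \<open>Endpoints of an edge in the contracted multigraph G'_cc, whose vertices are the
  components of (V, T - F).\<close>
definition cc_ends :: "'v set \<Rightarrow> ('e \<Rightarrow> 'v set) \<Rightarrow> 'e set \<Rightarrow> 'e \<Rightarrow> 'v set set" where
  "cc_ends Vs en S e = conn_comp en S Vs ` en e"

definition complete_cut :: "('e \<Rightarrow> 'v set) \<Rightarrow> 'e set \<Rightarrow> 'v set \<Rightarrow> 'e set" where
  "complete_cut en Es S = {e \<in> Es. card (en e \<inter> S) = 1}"

definition partial_cut :: "('e \<Rightarrow> 'v set) \<Rightarrow> ('e \<Rightarrow> real) \<Rightarrow> 'e set \<Rightarrow> 'v set \<Rightarrow> real \<Rightarrow> 'e set" where
  "partial_cut en w Es S W = {e \<in> complete_cut en Es S. w e < W}"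

text \<open>The counter process (0-based: step j processes e'_(j+1) with sides L j, R j).
  ctr L R j is the counter function k after j steps; Xsel L R j is X_(j+1).\<close>
fun ctr :: "(nat \<Rightarrow> 'a set) \<Rightarrow> (nat \<Rightarrow> 'a set) \<Rightarrow> nat \<Rightarrow> 'a \<Rightarrow> nat" where
  "ctr L R 0 = (\<lambda>_. 0)"
| "ctr L R (Suc j) =
     (let k = ctr L R j;
          X = (if Max (k ` L j) \<le> Max (k ` R j) then L j else R j)
      in (\<lambda>A. k A + (if A \<in> X then 1 else 0)))"

definition Xsel :: "(nat \<Rightarrow> 'a set) \<Rightarrow> (nat \<Rightarrow> 'a set) \<Rightarrow> nat \<Rightarrow> 'a set" where
  "Xsel L R j = (let k = ctr L R j in
     if Max (k ` L j) \<le> Max (k ` R j) then L j else R j)"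

end

theory Submission
  imports Defs
begin


lemma erel_sym: "(u,v) \<in> erel en S \<Longrightarrow> (v,u) \<in> erel en S"
  by (auto simp: erel_def insert_commute)

lemma rtr_sym: "(u,v) \<in> (erel en S)\<^sup>* \<Longrightarrow> (v,u) \<in> (erel en S)\<^sup>*"
  by (induct rule: rtrancl_induct) (auto intro: converse_rtrancl_into_rtrancl erel_sym)

lemma erel_mono: "S \<subseteq> S' \<Longrightarrow> erel en S \<subseteq> erel en S'"
  by (auto simp: erel_def)

lemma cc_self: "v \<in> W \<Longrightarrow> v \<in> conn_comp en S W v"
  by (simp add: conn_comp_def)

lemma cc_sub: "conn_comp en S W v \<subseteq> W"
  by (auto simp: conn_comp_def)

lemma cc_eq: "u \<in> conn_comp en S W v \<Longrightarrow> conn_comp en S W u = conn_comp en S W v"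
  unfolding conn_comp_def by (auto intro: rtrancl_trans rtr_sym)

lemma erel_insert: "en e = {a,b} \<Longrightarrow> erel en (insert e S) = erel en S \<union> {(a,b),(b,a)}"
  by (auto simp: erel_def doubleton_eq_iff)

lemma rtr_add:
  assumes symR: "\<And>x y. (x,y)\<in>R\<^sup>* \<Longrightarrow> (y,x)\<in>R\<^sup>*"
  shows "(x,y) \<in> (R \<union> {(a,b),(b,a)})\<^sup>* \<longleftrightarrow>
     (x,y)\<in>R\<^sup>* \<or> ((x,a)\<in>R\<^sup>* \<and> (b,y)\<in>R\<^sup>*) \<or> ((x,b)\<in>R\<^sup>* \<and> (a,y)\<in>R\<^sup>*)"
proof
  assume "(x,y) \<in> (R \<union> {(a,b),(b,a)})\<^sup>*"
  then show "(x,y)\<in>R\<^sup>* \<or> ((x,a)\<in>R\<^sup>* \<and> (b,y)\<in>R\<^sup>*) \<or> ((x,b)\<in>R\<^sup>* \<and> (a,y)\<in>R\<^sup>*)"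
  proof (induct rule: rtrancl_induct)
    case base then show ?case by simp
  next
    case (step y z)
    from step(2) consider "(y,z) \<in> R" | "y = a" "z = b" | "y = b" "z = a" by blast
    then show ?case
    proof cases
      case 1 then show ?thesis using step(3) by (meson rtrancl_into_rtrancl)
    next
      case 2 then show ?thesis using step(3) symR by (meson rtrancl_trans rtrancl.rtrancl_refl)
    next
      case 3 then show ?thesis using step(3) symR by (meson rtrancl_trans rtrancl.rtrancl_refl)
    qed
  qed
next
  have sub: "R\<^sup>* \<subseteq> (R \<union> {(a,b),(b,a)})\<^sup>*" by (rule rtrancl_mono) blast
  have ab: "(a,b) \<in> (R \<union> {(a,b),(b,a)})\<^sup>*" "(b,a) \<in> (R \<union> {(a,b),(b,a)})\<^sup>*" by auto
  assume "(x,y)\<in>R\<^sup>* \<or> ((x,a)\<in>R\<^sup>* \<and> (b,y)\<in>R\<^sup>*) \<or> ((x,b)\<in>R\<^sup>* \<and> (a,y)\<in>R\<^sup>*)"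
  then show "(x,y) \<in> (R \<union> {(a,b),(b,a)})\<^sup>*"
    using sub ab by (meson rtrancl_trans subsetD)
qed

lemma cc_insert:
  assumes "en e = {a,b}" "v \<in> W"
  shows "conn_comp en (insert e S) W v = (if v \<in> conn_comp en S W a \<union> conn_comp en S W b
     then conn_comp en S W a \<union> conn_comp en S W b else conn_comp en S W v)"
proof -
  have key: "\<And>x y. (x,y) \<in> (erel en (insert e S))\<^sup>* \<longleftrightarrow>
     (x,y)\<in>(erel en S)\<^sup>* \<or> ((x,a)\<in>(erel en S)\<^sup>* \<and> (b,y)\<in>(erel en S)\<^sup>*) \<or> ((x,b)\<in>(erel en S)\<^sup>* \<and> (a,y)\<in>(erel en S)\<^sup>*)"
    unfolding erel_insert[of en e a b, OF assms(1)] by (rule rtr_add) (rule rtr_sym)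
  show ?thesis
    using assms(2) unfolding conn_comp_def key
    by (auto intro: rtrancl_trans rtr_sym)
qed

lemma card_comps_insert:
  assumes W: "finite W" and e: "en e = {a,b}" and a: "a\<in>W" and b: "b\<in>W"
  shows "card (components W en S) = card (components W en (insert e S)) + (if (a,b) \<in> (erel en S)\<^sup>* then 0 else 1)"
proof -
  define C where "C = conn_comp en S W"
  define U where "U = C a \<union> C b"
  define N where "N = C ` (W - U)"
  have aU: "a \<in> U" unfolding U_def C_def using cc_self[OF a] by blast
  have ins: "conn_comp en (insert e S) W v = (if v \<in> U then U else C v)" if "v\<in>W" for v
    using cc_insert[where en=en and e=e and a=a and b=b, OF e that] unfolding U_def C_def .
  have 1: "components W en (insert e S) = insert U N"
  proof -
    have "components W en (insert e S) = (\<lambda>v. if v \<in> U then U else C v) ` W"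
      unfolding components_def using ins by (rule image_cong[OF refl])
    also have "\<dots> = (\<lambda>v. if v \<in> U then U else C v) ` (W \<inter> U) \<union> (\<lambda>v. if v \<in> U then U else C v) ` (W - U)"
      by blast
    also have "(\<lambda>v. if v \<in> U then U else C v) ` (W \<inter> U) = {U}" using a aU by auto
    also have "(\<lambda>v. if v \<in> U then U else C v) ` (W - U) = N" unfolding N_def by (rule image_cong) auto
    finally show ?thesis by simp
  qed
  have 2: "components W en S = {C a, C b} \<union> N"
  proof -
    have eqab: "C v = C a \<or> C v = C b" if "v \<in> U" for v
    proof -
      have "v \<in> C a \<or> v \<in> C b" using that by (simp add: U_def)
      then show ?thesis using cc_eq[of v en S W a] cc_eq[of v en S W b] unfolding C_def by blast
    qed
    have WU: "W = (W \<inter> U) \<union> (W - U)" by blast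
    have "components W en S = C ` W" unfolding components_def C_def ..
    also have "\<dots> = C ` (W \<inter> U) \<union> C ` (W - U)" by (subst WU) (rule image_Un)
    also have "C ` (W \<inter> U) = {C a, C b}"
    proof
      show "C ` (W \<inter> U) \<subseteq> {C a, C b}" using eqab by blast
      have "b \<in> U" unfolding U_def C_def using cc_self[OF b] by blast
      then show "{C a, C b} \<subseteq> C ` (W \<inter> U)" using a b aU by blast
    qed
    finally show ?thesis unfolding N_def .
  qed
  have nv: "\<And>v. v \<in> W - U \<Longrightarrow> C v \<noteq> U \<and> C v \<noteq> C a \<and> C v \<noteq> C b"
  proof -
    fix v assume v: "v \<in> W - U"
    then have "v \<in> C v" unfolding C_def by (simp add: cc_self)
    then show "C v \<noteq> U \<and> C v \<noteq> C a \<and> C v \<noteq> C b" using v unfolding U_def by auto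
  qed
  have notN: "X \<notin> N" if "\<forall>v\<in>W-U. C v \<noteq> X" for X
    using that unfolding N_def by (auto simp: image_iff)
  have 3: "U \<notin> N" "C a \<notin> N" "C b \<notin> N"
    by (rule notN; use nv in simp)+
  have fN: "finite N" unfolding N_def using W by simp
  have ab: "C a = C b \<longleftrightarrow> (a,b) \<in> (erel en S)\<^sup>*"
  proof
    assume "C a = C b" then have "b \<in> C a" using cc_self[OF b] unfolding C_def by simp
    then show "(a,b) \<in> (erel en S)\<^sup>*" unfolding C_def conn_comp_def by simp
  next
    assume "(a,b) \<in> (erel en S)\<^sup>*" then have "b \<in> C a" using b unfolding C_def conn_comp_def by simp
    then show "C a = C b" unfolding C_def using cc_eq by metis
  qed
  have c1: "card (insert U N) = card N + 1" using 3 fN by simp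
  have c2: "card ({C a, C b} \<union> N) = card {C a, C b} + card N"
    using 3 fN by (intro card_Un_disjoint) auto
  show ?thesis
  proof (cases "C a = C b")
    case True then show ?thesis unfolding 1 2 c2 using c1 ab by simp
  next
    case False then show ?thesis unfolding 1 2 c2 using c1 ab by simp
  qed
qed

lemma card_comps_empty: "finite W \<Longrightarrow> card (components W en {}) = card W"
proof -
  have "\<And>v. v \<in> W \<Longrightarrow> conn_comp en {} W v = {v}"
    by (auto simp: conn_comp_def erel_def)
  then have "components W en {} = (\<lambda>v. {v}) ` W" unfolding components_def by auto
  then show ?thesis by (simp add: card_image)
qed

lemma comps_lower:
  assumes "finite S" "finite W" "\<forall>e\<in>S. \<exists>a b. en e = {a,b} \<and> a\<in>W \<and> b\<in>W"
  shows "card W \<le> card (components W en S) + card S"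
  using assms
proof (induct S rule: finite_induct)
  case empty then show ?case by (simp add: card_comps_empty)
next
  case (insert x F)
  then obtain a b where "en x = {a,b}" "a\<in>W" "b\<in>W" by auto
  from card_comps_insert[where en=en and e=x and a=a and b=b and S=F, OF insert(4) this] insert show ?case
    by (auto split: if_splits)
qed

lemma comps_connected:
  assumes "connected_via W en S" "W \<noteq> {}"
  shows "components W en S = {W}"
proof -
  have "\<And>v. v \<in> W \<Longrightarrow> conn_comp en S W v = W"
    using assms(1) unfolding connected_via_def conn_comp_def by auto
  then show ?thesis unfolding components_def using assms(2) by auto
qed

lemma comps_remove:
  assumes "finite D" "D \<subseteq> T" "is_forest en T" "\<forall>e\<in>D. \<exists>a b. en e = {a,b} \<and> a\<in>W \<and> b\<in>W" "finite W"
  shows "card (components W en (T - D)) = card (components W en T) + card D"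
  using assms
proof (induct D rule: finite_induct)
  case empty then show ?case by simp
next
  case (insert d D)
  then obtain a b where ab: "en d = {a,b}" "a\<in>W" "b\<in>W" by auto
  have eq: "T - D = insert d (T - insert d D)" using insert by auto
  have "(a,b) \<notin> (erel en (T - {d}))\<^sup>*" using insert(5) ab(1) insert(4) unfolding is_forest_def by auto
  moreover have "(erel en (T - insert d D))\<^sup>* \<subseteq> (erel en (T - {d}))\<^sup>*"
    by (intro rtrancl_mono erel_mono) auto
  ultimately have nc: "(a,b) \<notin> (erel en (T - insert d D))\<^sup>*" by auto
  from card_comps_insert[where en=en and e=d and a=a and b=b and S="T - insert d D", OF insert(7) ab] nc eq
  have "card (components W en (T - insert d D)) = card (components W en (T - D)) + 1" by simp
  then show ?case using insert by simp
qed

lemma ctr_Suc': "ctr L R (Suc j) A = ctr L R j A + (if A \<in> Xsel L R j then 1 else 0)"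
  by (simp add: Xsel_def Let_def)

lemma ctr_count: "ctr L R n A = card {j. j < n \<and> A \<in> Xsel L R j}"
proof (induct n)
  case 0 then show ?case by simp
next
  case (Suc n)
  have "{j. j < Suc n \<and> A \<in> Xsel L R j} = {j. j < n \<and> A \<in> Xsel L R j} \<union> (if A \<in> Xsel L R n then {n} else {})"
    by (auto simp: less_Suc_eq)
  then show ?case using Suc by (simp del: ctr.simps add: ctr_Suc')
qed



lemma step_bound2:
  fixes k :: "'a \<Rightarrow> nat"
  assumes W: "finite W" and x: "x\<in>W" and y: "y\<in>W"
    and disj: "conn_comp en S W x \<inter> conn_comp en S W y = {}"
    and A: "A \<in> conn_comp en S W x"
    and M: "Max (k ` conn_comp en S W x) \<le> Max (k ` conn_comp en S W y)"
    and IH: "\<forall>A\<in>W. 2^(k A) \<le> card (conn_comp en S W A)"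
  shows "2^(k A + 1) \<le> card (conn_comp en S W x \<union> conn_comp en S W y)"
proof -
  let ?C = "conn_comp en S W"
  have fx: "finite (?C x)" "finite (?C y)" using finite_subset[OF cc_sub W] by auto
  have ny: "?C y \<noteq> {}" using cc_self[OF y] by auto
  have "Max (k ` ?C y) \<in> k ` ?C y" using fx ny by (intro Max_in) auto
  then obtain B where B: "B \<in> ?C y" "k B = Max (k ` ?C y)" by (metis imageE)
  have AW: "A \<in> W" "B \<in> W" using A B cc_sub[of en S W x] cc_sub[of en S W y] by auto
  have CA: "?C A = ?C x" using cc_eq[OF A] .
  have CB: "?C B = ?C y" using cc_eq[OF B(1)] .
  have 1: "2^(k A) \<le> card (?C x)" using IH AW CA by metis
  have 2: "2^(k B) \<le> card (?C y)" using IH AW CB by metis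
  have "k A \<le> Max (k ` ?C x)" using A fx by auto
  then have "k A \<le> k B" using M B by linarith
  then have p: "(2::nat)^(k A) \<le> 2^(k B)" by (simp add: power_increasing)
  have q: "(2::nat)^(k A + 1) = 2^(k A) + 2^(k A)" by simp
  have "2^(k A + 1) \<le> card (?C x) + card (?C y)" unfolding q using 1 2 p by linarith
  also have "\<dots> = card (?C x \<union> ?C y)" using card_Un_disjoint[OF fx disj] by simp
  finally show ?thesis .
qed

lemma counter_inv:
  fixes en :: "'e \<Rightarrow> 'a set" and L R :: "nat \<Rightarrow> 'a set"
  assumes W: "finite W"
  and LR: "\<forall>j<length es. \<exists>a b. en (es!j) = {a,b} \<and> a\<in>W \<and> b\<in>W \<and>
      (a,b) \<notin> (erel en (set (take j es)))\<^sup>* \<and>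
      L j = conn_comp en (set (take j es)) W a \<and> R j = conn_comp en (set (take j es)) W b"
  shows "j \<le> length es \<Longrightarrow> \<forall>A\<in>W. 2^(ctr L R j A) \<le> card (conn_comp en (set (take j es)) W A)"
proof (induct j)
  case 0
  show ?case
  proof
    fix A assume "A \<in> W"
    have "A \<in> conn_comp en (set (take 0 es)) W A" using \<open>A \<in> W\<close> by (rule cc_self)
    then have "conn_comp en (set (take 0 es)) W A \<noteq> {}" by blast
    moreover have "finite (conn_comp en (set (take 0 es)) W A)"
      using cc_sub W by (rule finite_subset)
    ultimately have "conn_comp en (set (take 0 es)) W A \<noteq> {}" "finite (conn_comp en (set (take 0 es)) W A)" by auto
    then show "2^(ctr L R 0 A) \<le> card (conn_comp en (set (take 0 es)) W A)"
      by (simp add: Suc_le_eq card_gt_0_iff)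
  qed
next
  case (Suc j)
  then have j: "j < length es" by simp
  define S where "S = set (take j es)"
  define C where "C = conn_comp en S W"
  define k where "k = ctr L R j"
  from LR j have "\<exists>a b. en (es!j) = {a,b} \<and> a\<in>W \<and> b\<in>W \<and> (a,b) \<notin> (erel en S)\<^sup>* \<and>
    L j = C a \<and> R j = C b" unfolding S_def C_def by simp
  then obtain a b where ab: "en (es!j) = {a,b}" "a\<in>W" "b\<in>W" "(a,b) \<notin> (erel en S)\<^sup>*"
    "L j = C a" "R j = C b" by blast
  have IH: "\<forall>A\<in>W. 2^(k A) \<le> card (C A)" using Suc j unfolding k_def C_def S_def by simp
  have S': "set (take (Suc j) es) = insert (es!j) S"
    unfolding S_def using j by (simp add: take_Suc_conv_app_nth)
  have disj: "C a \<inter> C b = {}"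
  proof (rule ccontr)
    assume "C a \<inter> C b \<noteq> {}"
    then obtain x where "x \<in> C a" "x \<in> C b" by auto
    then have "C a = C b" unfolding C_def using cc_eq[of x en S W a] cc_eq[of x en S W b] by simp
    then have "b \<in> C a" using cc_self[OF ab(3)] unfolding C_def by simp
    then show False using ab(4) unfolding C_def conn_comp_def by simp
  qed
  have fin: "finite (C a \<union> C b)" unfolding C_def by (simp add: finite_subset[OF cc_sub W])
  have X: "Xsel L R j = (if Max (k ` C a) \<le> Max (k ` C b) then C a else C b)"
    unfolding Xsel_def k_def using ab(5,6) by (simp add: Let_def)
  show ?case
  proof
    fix A assume AW: "A \<in> W"
    have comp': "conn_comp en (set (take (Suc j) es)) W A = (if A \<in> C a \<union> C b then C a \<union> C b else C A)"
      unfolding S' C_def by (rule cc_insert[where en=en and e="es!j" and a=a and b=b, OF ab(1) AW])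
    have ctr': "ctr L R (Suc j) A = k A + (if A \<in> Xsel L R j then 1 else 0)"
      unfolding k_def by (rule ctr_Suc')
    show "2^(ctr L R (Suc j) A) \<le> card (conn_comp en (set (take (Suc j) es)) W A)"
    proof (cases "A \<in> C a \<union> C b")
      case False
      then have "A \<notin> Xsel L R j" using X by auto
      then show ?thesis using False comp' ctr' IH AW by (simp del: ctr.simps)
    next
      case inU: True
      show ?thesis
      proof (cases "A \<in> Xsel L R j")
        case False
        have "C A = C a \<or> C A = C b"
        proof (cases "A \<in> C a")
          case True then show ?thesis using cc_eq[OF True[unfolded C_def]] unfolding C_def by simp
        next
          case False then have Ab: "A \<in> C b" using inU by simp
          show ?thesis using cc_eq[OF Ab[unfolded C_def]] unfolding C_def by simp
        qed
        then have "C A \<subseteq> C a \<union> C b" by auto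
        then have "card (C A) \<le> card (C a \<union> C b)" by (rule card_mono[OF fin])
        moreover have "2^(k A) \<le> card (C A)" using IH AW by simp
        ultimately have "2^(k A) \<le> card (C a \<union> C b)" by linarith
        then show ?thesis using False comp' ctr' inU by (simp del: ctr.simps)
      next
        case True
        show ?thesis
        proof (cases "Max (k ` C a) \<le> Max (k ` C b)")
          case c: True
          then have "A \<in> C a" using True X by simp
          from step_bound2[OF W ab(2,3) disj[unfolded C_def] this[unfolded C_def] c[unfolded C_def] IH[unfolded C_def]]
          show ?thesis using True comp' ctr' inU unfolding C_def by (simp del: ctr.simps)
        next
          case c: False
          then have "A \<in> C b" using True X by simp
          have c': "Max (k ` C b) \<le> Max (k ` C a)" using c by simp
          have disj': "C b \<inter> C a = {}" using disj by blast
          from step_bound2[OF W ab(3,2) disj'[unfolded C_def] \<open>A \<in> C b\<close>[unfolded C_def] c'[unfolded C_def] IH[unfolded C_def]]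
          show ?thesis using True comp' ctr' inU unfolding C_def by (simp del: ctr.simps add: Un_commute)
        qed
      qed
    qed
  qed
qed

theorem mainTheorem9:
  fixes V :: "'v set" and E :: "'e set" and ends :: "'e \<Rightarrow> 'v set"
    and w c :: "'e \<Rightarrow> real" and F T Tcc :: "'e set" and es :: "'e list"
    and L R :: "nat \<Rightarrow> 'v set set"
  assumes finV: "finite V" and finE: "finite E"
    and edges: "\<forall>e\<in>E. ends e \<subseteq> V \<and> card (ends e) = 2"
    and connG: "connected_via V ends E"
    and w_nonneg: "\<forall>e\<in>E. 0 \<le> w e" and c_pos: "\<forall>e\<in>E. 0 < c e"
    and F_sub: "F \<subseteq> E" and connG': "connected_via V ends (E - F)"
    and T_mst: "is_mst V ends w E T"
    and t_ge2: "T \<inter> F \<noteq> {}"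
    and Tcc_mst: "is_mst (components V ends (T - F)) (cc_ends V ends (T - F)) w (E - F) Tcc"
    and es_distinct: "distinct es" and es_set: "set es = Tcc"
    and es_sorted: "sorted (map w es)"
    and LR: "\<forall>j < length es. \<exists>a b.
               cc_ends V ends (T - F) (es ! j) = {a, b} \<and>
               L j = conn_comp (cc_ends V ends (T - F)) (set (take j es)) (components V ends (T - F)) a \<and>
               R j = conn_comp (cc_ends V ends (T - F)) (set (take j es)) (components V ends (T - F)) b"
  shows "(\<forall>A \<in> components V ends (T - F).
            real (ctr L R (card (T \<inter> F)) A) \<le> log 2 (real (card (T \<inter> F) + 1)))
       \<and> (\<forall>e\<in>E. real (card {j. j < card (T \<inter> F) \<and>
                    e \<in> complete_cut ends E (\<Union> (Xsel L R j))})
                 \<le> 2 * log 2 (real (card (T \<inter> F) + 1)))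
       \<and> (\<forall>e\<in>E. real (card {j. j < card (T \<inter> F) \<and>
                    e \<in> partial_cut ends w E (\<Union> (Xsel L R j)) (w (es ! j))})
                 \<le> 2 * log 2 (real (card (T \<inter> F) + 1)))"
proof -
  let ?VT = "components V ends (T - F)"
  let ?en = "cc_ends V ends (T - F)"
  define m where "m = card (T \<inter> F)"
  have Tsub: "T \<subseteq> E" and Tconn: "connected_via V ends T" and Tfor: "is_forest ends T"
    using T_mst unfolding is_mst_def spanning_tree_def by auto
  have Tccsub: "Tcc \<subseteq> E - F" and Tccconn: "connected_via ?VT ?en Tcc" and Tccfor: "is_forest ?en Tcc"
    using Tcc_mst unfolding is_mst_def spanning_tree_def by auto
  have ends2: "\<exists>a b. ends e = {a,b} \<and> a\<in>V \<and> b\<in>V" if "e \<in> E" for e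
  proof -
    from edges that have "ends e \<subseteq> V" "card (ends e) = 2" by auto
    moreover from this obtain a b where "ends e = {a,b}" by (auto simp: card_2_iff)
    ultimately show ?thesis by auto
  qed
  have finT: "finite T" using finE Tsub finite_subset by blast
  obtain e0 where e0: "e0 \<in> T \<inter> F" using t_ge2 by blast
  then obtain a0 b0 where "ends e0 = {a0,b0}" "a0 \<in> V" using ends2 Tsub by blast
  then have Vne: "V \<noteq> {}" by blast
  have c1: "components V ends T = {V}" by (rule comps_connected[OF Tconn Vne])
  have "card (components V ends (T - (T \<inter> F))) = card (components V ends T) + card (T \<inter> F)"
    by (rule comps_remove) (use finT Tfor ends2 Tsub finV in auto)
  moreover have "T - (T \<inter> F) = T - F" by blast
  ultimately have cVT: "card ?VT = m + 1" unfolding m_def c1 by simp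
  have finVT: "finite ?VT" unfolding components_def using finV by simp
  have ccE: "\<exists>a b. ?en e = {a,b} \<and> a\<in>?VT \<and> b\<in>?VT" if "e \<in> E" for e
  proof -
    from ends2[OF that] obtain u v where uv: "ends e = {u,v}" "u\<in>V" "v\<in>V" by blast
    then show ?thesis unfolding cc_ends_def components_def by auto
  qed
  have VTne: "?VT \<noteq> {}" using Vne unfolding components_def by simp
  have finTcc: "finite Tcc" using Tccsub finE finite_subset by blast
  have "components ?VT ?en Tcc = {?VT}" by (rule comps_connected[OF Tccconn VTne])
  moreover have "card ?VT \<le> card (components ?VT ?en Tcc) + card Tcc"
    by (rule comps_lower) (use finTcc finVT ccE Tccsub in auto)
  ultimately have "m \<le> card Tcc" using cVT by simp
  also have "card Tcc = length es" using distinct_card[OF es_distinct] es_set by simp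
  finally have mlen: "m \<le> length es" .
  have LR': "\<forall>j<length es. \<exists>a b. ?en (es!j) = {a,b} \<and> a\<in>?VT \<and> b\<in>?VT \<and>
      (a,b) \<notin> (erel ?en (set (take j es)))\<^sup>* \<and>
      L j = conn_comp ?en (set (take j es)) ?VT a \<and> R j = conn_comp ?en (set (take j es)) ?VT b"
  proof (intro allI impI)
    fix j assume j: "j < length es"
    have "j < length es \<longrightarrow> (\<exists>a b. ?en (es ! j) = {a, b} \<and>
               L j = conn_comp ?en (set (take j es)) ?VT a \<and>
               R j = conn_comp ?en (set (take j es)) ?VT b)" using LR by (rule spec)
    with j obtain a b where ab: "?en (es!j) = {a,b}"
      "L j = conn_comp ?en (set (take j es)) ?VT a" "R j = conn_comp ?en (set (take j es)) ?VT b" by blast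
    have ej: "es!j \<in> Tcc" using es_set j nth_mem by blast
    then have "es!j \<in> E" using Tccsub by blast
    from ccE[OF this] obtain a' b' where a'b': "?en (es!j) = {a',b'}" "a'\<in>?VT" "b'\<in>?VT" by blast
    have "{a,b} = {a',b'}" using ab(1) a'b'(1) by simp
    then have "{a,b} \<subseteq> ?VT" using a'b'(2,3) by simp
    then have abV: "a \<in> ?VT" "b \<in> ?VT" by simp_all
    have "\<forall>u v. ?en (es!j) = {u,v} \<longrightarrow> (u,v) \<notin> (erel ?en (Tcc - {es!j}))\<^sup>*"
      using Tccfor ej unfolding is_forest_def by (rule bspec)
    then have nf: "(a,b) \<notin> (erel ?en (Tcc - {es!j}))\<^sup>*" using ab(1) by simp
    have "distinct (take j es @ [es!j])" using es_distinct j by (metis distinct_take take_Suc_conv_app_nth)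
    then have "es!j \<notin> set (take j es)" by simp
    moreover have "set (take j es) \<subseteq> Tcc" using es_set set_take_subset by metis
    ultimately have "set (take j es) \<subseteq> Tcc - {es!j}" by blast
    then have "(erel ?en (set (take j es)))\<^sup>* \<subseteq> (erel ?en (Tcc - {es!j}))\<^sup>*"
      by (intro rtrancl_mono erel_mono)
    then have "(a,b) \<notin> (erel ?en (set (take j es)))\<^sup>*" using nf by blast
    then show "\<exists>a b. ?en (es!j) = {a,b} \<and> a\<in>?VT \<and> b\<in>?VT \<and>
      (a,b) \<notin> (erel ?en (set (take j es)))\<^sup>* \<and>
      L j = conn_comp ?en (set (take j es)) ?VT a \<and> R j = conn_comp ?en (set (take j es)) ?VT b"
      using ab abV by blast
  qed
  have inv: "\<forall>A\<in>?VT. 2^(ctr L R m A) \<le> card (conn_comp ?en (set (take m es)) ?VT A)"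
    by (rule counter_inv[OF finVT LR' mlen])
  have kb: "real (ctr L R m A) \<le> log 2 (real (m+1))" if A: "A \<in> ?VT" for A
  proof -
    have "card (conn_comp ?en (set (take m es)) ?VT A) \<le> card ?VT"
      using finVT cc_sub by (rule card_mono)
    moreover have "2^(ctr L R m A) \<le> card (conn_comp ?en (set (take m es)) ?VT A)" using inv A by (rule bspec)
    ultimately have "2^(ctr L R m A) \<le> m + 1" using cVT by linarith
    then show ?thesis by (rule le_log2_of_power)
  qed
  have Xsub: "Xsel L R j \<subseteq> ?VT" if "j < m" for j
  proof -
    have "j < length es" using that mlen by linarith
    with LR obtain a b where
      Lj: "L j = conn_comp ?en (set (take j es)) ?VT a" and Rj: "R j = conn_comp ?en (set (take j es)) ?VT b"
      by blast
    have "L j \<subseteq> ?VT" unfolding Lj by (rule cc_sub)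
    moreover have "R j \<subseteq> ?VT" unfolding Rj by (rule cc_sub)
    ultimately show ?thesis unfolding Xsel_def Let_def by simp
  qed
  have memA: "conn_comp ends (T - F) V x \<in> Xsel L R j" if "j < m" "x \<in> \<Union>(Xsel L R j)" for j x
  proof -
    from that obtain B where B: "B \<in> Xsel L R j" "x \<in> B" by blast
    then have "B \<in> ?VT" using Xsub[OF that(1)] by blast
    then obtain w where Bw: "B = conn_comp ends (T - F) V w" unfolding components_def by blast
    have "conn_comp ends (T - F) V x = B" using B(2) unfolding Bw by (rule cc_eq)
    then show ?thesis using B by simp
  qed
  have part2: "real (card {j. j < m \<and> e \<in> complete_cut ends E (\<Union> (Xsel L R j))})
                 \<le> 2 * log 2 (real (m + 1))" if e: "e \<in> E" for e
  proof -
    from ends2[OF e] obtain u v where uv: "ends e = {u,v}" "u\<in>V" "v\<in>V" by blast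
    define Au where "Au = conn_comp ends (T - F) V u"
    define Av where "Av = conn_comp ends (T - F) V v"
    have AuV: "Au \<in> ?VT" "Av \<in> ?VT" unfolding Au_def Av_def components_def using uv by auto
    have sub: "{j. j < m \<and> e \<in> complete_cut ends E (\<Union> (Xsel L R j))}
       \<subseteq> {j. j < m \<and> Au \<in> Xsel L R j} \<union> {j. j < m \<and> Av \<in> Xsel L R j}"
    proof
      fix j assume "j \<in> {j. j < m \<and> e \<in> complete_cut ends E (\<Union> (Xsel L R j))}"
      then have j: "j < m" and c: "card (ends e \<inter> \<Union> (Xsel L R j)) = 1"
        unfolding complete_cut_def by auto
      from c have "ends e \<inter> \<Union> (Xsel L R j) \<noteq> {}" by auto
      then have "u \<in> \<Union> (Xsel L R j) \<or> v \<in> \<Union> (Xsel L R j)" using uv by auto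
      then show "j \<in> {j. j < m \<and> Au \<in> Xsel L R j} \<union> {j. j < m \<and> Av \<in> Xsel L R j}"
        using memA[OF j] j unfolding Au_def Av_def by blast
    qed
    have "card {j. j < m \<and> e \<in> complete_cut ends E (\<Union> (Xsel L R j))}
       \<le> card ({j. j < m \<and> Au \<in> Xsel L R j} \<union> {j. j < m \<and> Av \<in> Xsel L R j})"
      by (rule card_mono[OF _ sub]) auto
    also have "\<dots> \<le> card {j. j < m \<and> Au \<in> Xsel L R j} + card {j. j < m \<and> Av \<in> Xsel L R j}"
      by (rule card_Un_le)
    also have "\<dots> = ctr L R m Au + ctr L R m Av" by (simp only: ctr_count)
    finally have "real (card {j. j < m \<and> e \<in> complete_cut ends E (\<Union> (Xsel L R j))})
        \<le> real (ctr L R m Au) + real (ctr L R m Av)" by linarith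
    also have "\<dots> \<le> 2 * log 2 (real (m + 1))" using kb[OF AuV(1)] kb[OF AuV(2)] by linarith
    finally show ?thesis .
  qed
  have part3: "real (card {j. j < m \<and> e \<in> partial_cut ends w E (\<Union> (Xsel L R j)) (w (es ! j))})
                 \<le> 2 * log 2 (real (m + 1))" if e: "e \<in> E" for e
  proof -
    have "card {j. j < m \<and> e \<in> partial_cut ends w E (\<Union> (Xsel L R j)) (w (es ! j))}
       \<le> card {j. j < m \<and> e \<in> complete_cut ends E (\<Union> (Xsel L R j))}"
      by (rule card_mono) (auto simp: partial_cut_def)
    then show ?thesis using part2[OF e] by linarith
  qed
  show ?thesis using kb part2 part3 unfolding m_def by blast
qed

end
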